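(* Let $\sum_{\mathbf i}a_{\mathbf i}\,x_{i_1}x_{i_2}\cdots x_{i_n}$ ($a_{\mathbf i}\in K$) be a homogeneous primitive element of degree $n$ of the free associative algebra $K\langle x_1,\dots,x_n\rangle$. Then $$\sum_{\mathbf i}a_{\mathbf i}\,(\cdots((x_{i_1}\cdot x_{i_2})\cdot x_{i_3})\cdots)\cdot x_{i_n}\quad\text{and}\quad\sum_{\mathbf i}a_{\mathbf i}\,x_{i_1}\cdot(x_{i_2}\cdot(\cdots(x_{i_{n-1}}\cdot x_{i_n})\cdots))$$ are homogeneous primitive elements of degree $n$ of $K\{x_1,\dots,x_n\}$. In particular, for $n\ge3$, $\mathrm{Prim}\,\mathcal Mag(n)$ contains at least two copies of the $\Sigma_n$-representation $\mathcal Lie(n)$.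
   Context: $K$ is a field of characteristic $0$. In $K\langle x_1,\dots,x_n\rangle$ (free unital associative algebra), an element $f$ is primitive if $\Delta(f)=f\otimes1+1\otimes f$, where $\Delta$ is the algebra homomorphism with $\Delta(x_i)=x_i\otimes1+1\otimes x_i$. $K\{x_1,\dots,x_n\}$ is the free unitary magma algebra (non-associative, non-commutative, unit $1$, product $a\cdot b$); its tensor square is a magma algebra componentwise with $1\cdot a=a\cdot1=a$, and the co-addition $\Delta_a$ is the unital algebra homomorphism with $\Delta_a(x_i)=x_i\otimes1+1\otimes x_i$; $f$ is primitive if $\Delta_a(f)=f\otimes1+1\otimes f$. $\mathrm{Prim}\,\mathcal Mag(n)$ is the space of primitive elements of $K\{x_1,\dots,x_n\}$ multilinear of degree $n$, with $\Sigma_n$ acting by permuting variables; $\mathcal Lie(n)$ is the $\Sigma_n$-module of multilinear Lie polynomials of degree $n$ in $x_1,\dots,x_n$ (of dimension $(n-1)!$). *)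

theory Defs
  imports "HOL-Combinatorics.Permutations"
begin

text \<open>An element of the free unital associative algebra is given by its coefficient
  function on words (lists of variable indices); the word [i1,...,ik] stands for the
  monomial x_i1 ... x_ik, the empty word for 1. Genuine elements have finite support.
  An element of the tensor square is a coefficient function on pairs of words
  (basis u (x) v).\<close>

type_synonym 'k assoc = "nat list \<Rightarrow> 'k"
type_synonym 'k assoc2 = "nat list \<times> nat list \<Rightarrow> 'k"

definition amul :: "'k::comm_ring_1 assoc \<Rightarrow> 'k assoc \<Rightarrow> 'k assoc" where
  "amul f g w = (\<Sum>k\<le>length w. f (take k w) * g (drop k w))"

text \<open>Product in the tensor square: (u (x) v)(u' (x) v') = uu' (x) vv'.\<close>
definition a2mul :: "'k::comm_ring_1 assoc2 \<Rightarrow> 'k assoc2 \<Rightarrow> 'k assoc2" where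
  "a2mul F G p = (\<Sum>k\<le>length (fst p). \<Sum>l\<le>length (snd p).
      F (take k (fst p), take l (snd p)) * G (drop k (fst p), drop l (snd p)))"

definition a2one :: "'k::comm_ring_1 assoc2" where
  "a2one p = (if p = ([], []) then 1 else 0)"

definition a2gen :: "nat \<Rightarrow> 'k::comm_ring_1 assoc2" where
  "a2gen i p = (if p = ([i], []) then 1 else 0) + (if p = ([], [i]) then 1 else 0)"

text \<open>Delta on the monomial x_i1...x_ik: Delta(x_i1) ... Delta(x_ik) (Delta is an algebra hom).\<close>
definition adelta_word :: "nat list \<Rightarrow> 'k::comm_ring_1 assoc2" where
  "adelta_word w = foldr (\<lambda>i acc. a2mul (a2gen i) acc) w a2one"

text \<open>Linear extension of Delta (for finitely supported f).\<close>
definition adelta :: "'k::comm_ring_1 assoc \<Rightarrow> 'k assoc2" where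
  "adelta f p = (\<Sum>w\<in>{w. f w \<noteq> 0}. f w * adelta_word w p)"

definition atens_one :: "'k::comm_ring_1 assoc \<Rightarrow> 'k assoc2" where
  "atens_one f p = (if snd p = [] then f (fst p) else 0)"

definition aone_tens :: "'k::comm_ring_1 assoc \<Rightarrow> 'k assoc2" where
  "aone_tens f p = (if fst p = [] then f (snd p) else 0)"

definition aprim :: "'k::comm_ring_1 assoc \<Rightarrow> bool" where
  "aprim f \<longleftrightarrow> finite {w. f w \<noteq> 0} \<and>
     adelta f = (\<lambda>p. atens_one f p + aone_tens f p)"

text \<open>Basis: the unit MOne and the nonassociative monomials (binary trees with leaves
  MX i, containing no MOne). The product of basis elements is mmul (1.a = a.1 = a).\<close>

datatype mag = MOne | MX nat | MMul mag mag

fun mmul :: "mag \<Rightarrow> mag \<Rightarrow> mag" where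
  "mmul MOne t = t"
| "mmul s MOne = s"
| "mmul s t = MMul s t"

fun no_one :: "mag \<Rightarrow> bool" where
  "no_one MOne = False"
| "no_one (MX i) = True"
| "no_one (MMul s t) = (no_one s \<and> no_one t)"

definition mnormal :: "mag \<Rightarrow> bool" where
  "mnormal t \<longleftrightarrow> t = MOne \<or> no_one t"

fun leaves :: "mag \<Rightarrow> nat list" where
  "leaves MOne = []"
| "leaves (MX i) = [i]"
| "leaves (MMul s t) = leaves s @ leaves t"

fun map_leaves :: "(nat \<Rightarrow> nat) \<Rightarrow> mag \<Rightarrow> mag" where
  "map_leaves \<sigma> MOne = MOne"
| "map_leaves \<sigma> (MX i) = MX (\<sigma> i)"
| "map_leaves \<sigma> (MMul s t) = MMul (map_leaves \<sigma> s) (map_leaves \<sigma> t)"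

type_synonym 'k magma = "mag \<Rightarrow> 'k"
type_synonym 'k magma2 = "mag \<times> mag \<Rightarrow> 'k"

text \<open>Product in the tensor square (componentwise): (a (x) b)(c (x) d) = (a.c) (x) (b.d).\<close>
definition m2mul :: "'k::comm_ring_1 magma2 \<Rightarrow> 'k magma2 \<Rightarrow> 'k magma2" where
  "m2mul F G p = (\<Sum>(a, c)\<in>{(a, c). mmul a c = fst p}. \<Sum>(b, d)\<in>{(b, d). mmul b d = snd p}.
      F (a, b) * G (c, d))"

definition m2one :: "'k::comm_ring_1 magma2" where
  "m2one p = (if p = (MOne, MOne) then 1 else 0)"

definition m2gen :: "nat \<Rightarrow> 'k::comm_ring_1 magma2" where
  "m2gen i p = (if p = (MX i, MOne) then 1 else 0) + (if p = (MOne, MX i) then 1 else 0)"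

fun mdelta_basis :: "mag \<Rightarrow> 'k::comm_ring_1 magma2" where
  "mdelta_basis MOne = m2one"
| "mdelta_basis (MX i) = m2gen i"
| "mdelta_basis (MMul s t) = m2mul (mdelta_basis s) (mdelta_basis t)"

definition mdelta :: "'k::comm_ring_1 magma \<Rightarrow> 'k magma2" where
  "mdelta g p = (\<Sum>t\<in>{t. g t \<noteq> 0}. g t * mdelta_basis t p)"

definition mtens_one :: "'k::comm_ring_1 magma \<Rightarrow> 'k magma2" where
  "mtens_one g p = (if snd p = MOne then g (fst p) else 0)"

definition mone_tens :: "'k::comm_ring_1 magma \<Rightarrow> 'k magma2" where
  "mone_tens g p = (if fst p = MOne then g (snd p) else 0)"

definition mprim :: "'k::comm_ring_1 magma \<Rightarrow> bool" where
  "mprim g \<longleftrightarrow> finite {t. g t \<noteq> 0} \<and> (\<forall>t. g t \<noteq> 0 \<longrightarrow> mnormal t) \<and>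
     mdelta g = (\<lambda>p. mtens_one g p + mone_tens g p)"

fun lnorm :: "nat list \<Rightarrow> mag" where
  "lnorm [] = MOne"
| "lnorm (i # is) = foldl (\<lambda>t j. MMul t (MX j)) (MX i) is"

fun rnorm :: "nat list \<Rightarrow> mag" where
  "rnorm [] = MOne"
| "rnorm [i] = MX i"
| "rnorm (i # j # is) = MMul (MX i) (rnorm (j # is))"

definition bracket_image :: "(nat list \<Rightarrow> mag) \<Rightarrow> 'k::comm_ring_1 assoc \<Rightarrow> 'k magma" where
  "bracket_image \<beta> f t = (\<Sum>w\<in>{w. f w \<noteq> 0}. if \<beta> w = t then f w else 0)"

inductive_set lie_polys :: "'k::comm_ring_1 assoc set" where
  gen: "(\<lambda>w. if w = [i] then 1 else 0) \<in> lie_polys"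
| add: "f \<in> lie_polys \<Longrightarrow> g \<in> lie_polys \<Longrightarrow> (\<lambda>w. f w + g w) \<in> lie_polys"
| smult: "f \<in> lie_polys \<Longrightarrow> (\<lambda>w. c * f w) \<in> lie_polys"
| bracket: "f \<in> lie_polys \<Longrightarrow> g \<in> lie_polys \<Longrightarrow> (\<lambda>w. amul f g w - amul g f w) \<in> lie_polys"

definition Lie_n :: "nat \<Rightarrow> 'k::comm_ring_1 assoc set" where
  "Lie_n n = {f \<in> lie_polys. \<forall>w. f w \<noteq> 0 \<longrightarrow> distinct w \<and> set w = {1..n}}"

definition Prim_Mag_n :: "nat \<Rightarrow> 'k::comm_ring_1 magma set" where
  "Prim_Mag_n n = {g. mprim g \<and>
     (\<forall>t. g t \<noteq> 0 \<longrightarrow> no_one t \<and> distinct (leaves t) \<and> set (leaves t) = {1..n})}"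

end

theory Submission
  imports Defs
begin



lemma sum_take_nil:
  "(\<Sum>k\<le>length u. if take k u = [] then h k else 0) = h 0"
proof (cases "u = []")
  case True then show ?thesis by simp
next
  case False
  then have "\<And>k. (take k u = []) = (k = 0)" by auto
  then show ?thesis by (simp add: sum.delta)
qed

lemma take_single_iff:
  assumes "k \<le> length u"
  shows "(take k u = [i]) = (k = 1 \<and> u \<noteq> [] \<and> hd u = i)"
proof
  assume h: "take k u = [i]"
  then have "length (take k u) = 1" by simp
  then have k: "k = 1" using assms by simp
  then show "k = 1 \<and> u \<noteq> [] \<and> hd u = i" using h by (cases u) auto
next
  assume "k = 1 \<and> u \<noteq> [] \<and> hd u = i"
  then show "take k u = [i]" by (cases u) auto
qed

lemma sum_take_single:
  "(\<Sum>k\<le>length u. if take k u = [i] then h k else 0) = (if u \<noteq> [] \<and> hd u = i then h 1 else 0)"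
proof -
  have "(\<Sum>k\<le>length u. if take k u = [i] then h k else 0)
     = (\<Sum>k\<le>length u. if k = 1 then (if u \<noteq> [] \<and> hd u = i then h k else 0) else 0)"
    by (rule sum.cong) (auto simp: take_single_iff)
  also have "\<dots> = (if u \<noteq> [] \<and> hd u = i then h 1 else 0)"
  proof -
    have "u \<noteq> [] \<Longrightarrow> 1 \<le> length u" by (cases u) auto
    then show ?thesis by (simp add: sum.delta)
  qed
  finally show ?thesis .
qed

lemma sum_drop_nil:
  "(\<Sum>k\<le>length u. if drop k u = [] then h k else 0) = h (length u)"
proof -
  have "(\<Sum>k\<le>length u. if drop k u = [] then h k else 0)
     = (\<Sum>k\<le>length u. if k = length u then h k else 0)"
    by (rule sum.cong) auto
  then show ?thesis by (simp add: sum.delta)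
qed

lemma drop_single_iff:
  assumes "k \<le> length u"
  shows "(drop k u = [j]) = (k = length u - 1 \<and> u \<noteq> [] \<and> last u = j)"
proof
  assume h: "drop k u = [j]"
  then have "length (drop k u) = 1" by simp
  then have k: "k = length u - 1" "u \<noteq> []" using assms by auto
  then have "k < length u" by simp
  then have "last u = last (drop k u)" by (simp add: last_drop) 
  moreover have "last (drop k u) = j" using h by simp
  ultimately show "k = length u - 1 \<and> u \<noteq> [] \<and> last u = j" using k by simp
next
  assume h: "k = length u - 1 \<and> u \<noteq> [] \<and> last u = j"
  then have "length u \<ge> 1" by (cases u) auto
  then have "length (drop k u) = 1" using h by simp
  then obtain x where x: "drop k u = [x]" by (cases "drop k u") auto
  have l1: "last (drop k u) = last u" using h by (simp add: last_drop)
  have l2: "last (drop k u) = x" using x by simp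
  have "x = j" using l1 l2 h by simp
  then show "drop k u = [j]" using x by simp
qed

lemma sum_drop_single:
  "(\<Sum>k\<le>length u. if drop k u = [j] then h k else 0) = (if u \<noteq> [] \<and> last u = j then h (length u - 1) else 0)"
proof -
  have "(\<Sum>k\<le>length u. if drop k u = [j] then h k else 0)
     = (\<Sum>k\<le>length u. if k = length u - 1 then (if u \<noteq> [] \<and> last u = j then h k else 0) else 0)"
    by (rule sum.cong) (auto simp: drop_single_iff)
  also have "\<dots> = (if u \<noteq> [] \<and> last u = j then h (length u - 1) else 0)"
    by (simp add: sum.delta)
  finally show ?thesis .
qed

lemma sum_if_const: "(\<Sum>l\<in>A. if P then g l else 0) = (if P then (\<Sum>l\<in>A. g l) else 0)"
  by simp

lemma a2mul_gen_left:
  "a2mul (a2gen i) F (u, v) =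
     (if u \<noteq> [] \<and> hd u = i then F (tl u, v) else 0) + (if v \<noteq> [] \<and> hd v = i then F (u, tl v) else 0)"
proof -
  have "a2mul (a2gen i) F (u, v) =
    (\<Sum>k\<le>length u. \<Sum>l\<le>length v. (if take k u = [i] then (if take l v = [] then F (drop k u, drop l v) else 0) else 0)
    + (if take k u = [] then (if take l v = [i] then F (drop k u, drop l v) else 0) else 0))"
    unfolding a2mul_def a2gen_def by (intro sum.cong refl) (auto simp: distrib_right)
  also have "\<dots> = 
    (\<Sum>k\<le>length u. \<Sum>l\<le>length v. if take k u = [i] then (if take l v = [] then F (drop k u, drop l v) else 0) else 0)
  + (\<Sum>k\<le>length u. \<Sum>l\<le>length v. if take k u = [] then (if take l v = [i] then F (drop k u, drop l v) else 0) else 0)"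
    by (simp add: sum.distrib)
  also have "\<dots> = (\<Sum>k\<le>length u. if take k u = [i] then F (drop k u, v) else 0)
     + (\<Sum>k\<le>length u. if take k u = [] then (if v \<noteq> [] \<and> hd v = i then F (drop k u, drop 1 v) else 0) else 0)"
    by (simp only: sum_if_const sum_take_nil sum_take_single drop_0 One_nat_def)
  also have "\<dots> = (if u \<noteq> [] \<and> hd u = i then F (tl u, v) else 0) + (if v \<noteq> [] \<and> hd v = i then F (u, tl v) else 0)"
    by (simp only: sum_take_nil sum_take_single) (simp add: drop_Suc)
  finally show ?thesis .
qed

lemma a2mul_gen_right:
  "a2mul F (a2gen j) (u, v) =
     (if u \<noteq> [] \<and> last u = j then F (butlast u, v) else 0) + (if v \<noteq> [] \<and> last v = j then F (u, butlast v) else 0)"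
proof -
  have "a2mul F (a2gen j) (u, v) =
    (\<Sum>k\<le>length u. \<Sum>l\<le>length v. (if drop k u = [j] then (if drop l v = [] then F (take k u, take l v) else 0) else 0)
    + (if drop k u = [] then (if drop l v = [j] then F (take k u, take l v) else 0) else 0))"
    unfolding a2mul_def a2gen_def by (intro sum.cong refl) (auto simp: distrib_left)
  also have "\<dots> = 
    (\<Sum>k\<le>length u. \<Sum>l\<le>length v. if drop k u = [j] then (if drop l v = [] then F (take k u, take l v) else 0) else 0)
  + (\<Sum>k\<le>length u. \<Sum>l\<le>length v. if drop k u = [] then (if drop l v = [j] then F (take k u, take l v) else 0) else 0)"
    by (simp add: sum.distrib)
  also have "\<dots> = (\<Sum>k\<le>length u. if drop k u = [j] then F (take k u, take (length v) v) else 0)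
     + (\<Sum>k\<le>length u. if drop k u = [] then (if v \<noteq> [] \<and> last v = j then F (take k u, take (length v - 1) v) else 0) else 0)"
    by (simp only: sum_if_const sum_drop_nil sum_drop_single)
  also have "\<dots> = (if u \<noteq> [] \<and> last u = j then F (butlast u, v) else 0) + (if v \<noteq> [] \<and> last v = j then F (u, butlast v) else 0)"
    by (simp only: sum_drop_nil sum_drop_single) (simp add: butlast_conv_take)
  finally show ?thesis .
qed

lemma if10_mult: "(if P then 1 else 0) * x = (if P then x else (0::'a::comm_ring_1))"
  by simp

lemma if_and0: "(if A \<and> B then x else 0) = (if A then (if B then x else 0) else 0)"
  by simp

lemma if0_mult: "(if A then y else 0) * x = (if A then y * x else (0::'a::comm_ring_1))"
  by simp

lemma a2mul_one_left: "a2mul a2one G = G"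
proof
  fix p :: "nat list \<times> nat list"
  obtain u v where p: "p = (u, v)" by (cases p)
  have "a2mul a2one G (u, v) = (\<Sum>k\<le>length u. if take k u = [] then (\<Sum>l\<le>length v. if take l v = [] then G (drop k u, drop l v) else 0) else 0)"
    unfolding a2mul_def a2one_def fst_conv snd_conv prod.inject
    by (intro sum.cong refl) (simp only: if_and0 if0_mult mult_1_left sum_if_const)
  also have "\<dots> = G (u, v)" by (simp only: sum_take_nil) simp
  finally show "a2mul a2one G p = G p" using p by simp
qed

lemma adw_cons: "adelta_word (i # w) = a2mul (a2gen i) (adelta_word w)"
  by (simp add: adelta_word_def)

lemma adw_nil: "adelta_word [] = a2one"
  by (simp add: adelta_word_def)

lemma adw_single: "adelta_word [i] = a2gen i"
proof
  fix p :: "nat list \<times> nat list"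
  obtain u v where p: "p = (u, v)" by (cases p)
  show "adelta_word [i] p = a2gen i p"
    unfolding p adw_cons adw_nil a2mul_gen_left
    by (cases u; cases v) (auto simp: a2one_def a2gen_def)
qed

lemma sum_atMost_Suc_shift': "(\<Sum>k\<le>Suc m. h k) = h 0 + (\<Sum>k\<le>m. h (Suc k))"
  by (rule sum.atMost_Suc_shift)

lemma assoc_gen: "a2mul (a2gen i) (a2mul F G) = a2mul (a2mul (a2gen i) F) G"
proof
  fix p :: "nat list \<times> nat list"
  obtain u v where p: "p = (u, v)" by (cases p)
  have R: "a2mul (a2mul (a2gen i) F) G (u, v) =
     (\<Sum>k\<le>length u. \<Sum>l\<le>length v. (if take k u \<noteq> [] \<and> hd (take k u) = i then F (tl (take k u), take l v) else 0) * G (drop k u, drop l v))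
   + (\<Sum>k\<le>length u. \<Sum>l\<le>length v. (if take l v \<noteq> [] \<and> hd (take l v) = i then F (take k u, tl (take l v)) else 0) * G (drop k u, drop l v))"
    unfolding a2mul_def[of "a2mul (a2gen i) F"] by (simp add: a2mul_gen_left distrib_right sum.distrib)
  have R1: "(\<Sum>k\<le>length u. \<Sum>l\<le>length v. (if take k u \<noteq> [] \<and> hd (take k u) = i then F (tl (take k u), take l v) else 0) * G (drop k u, drop l v))
     = (if u \<noteq> [] \<and> hd u = i then a2mul F G (tl u, v) else 0)"
  proof (cases u)
    case Nil then show ?thesis by simp
  next
    case (Cons x u')
    then show ?thesis
      by (simp only: length_Cons sum_atMost_Suc_shift' take_0 take_Suc_Cons drop_Suc_Cons) (simp add: a2mul_def)
  qed
  have R2: "\<And>k. (\<Sum>l\<le>length v. (if take l v \<noteq> [] \<and> hd (take l v) = i then F (take k u, tl (take l v)) else 0) * G (drop k u, drop l v))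
     = (if v \<noteq> [] \<and> hd v = i then (\<Sum>l\<le>length (tl v). F (take k u, take l (tl v)) * G (drop k u, drop l (tl v))) else 0)"
  proof -
    fix k
    show "?thesis k"
    proof (cases v)
      case Nil then show ?thesis by simp
    next
      case (Cons y v')
      then show ?thesis
        by (simp only: length_Cons sum_atMost_Suc_shift' take_0 take_Suc_Cons drop_Suc_Cons) simp
    qed
  qed
  have "a2mul (a2mul (a2gen i) F) G (u, v) = (if u \<noteq> [] \<and> hd u = i then a2mul F G (tl u, v) else 0)
     + (if v \<noteq> [] \<and> hd v = i then a2mul F G (u, tl v) else 0)"
    unfolding R R1 R2 by (simp add: a2mul_def)
  then show "a2mul (a2gen i) (a2mul F G) p = a2mul (a2mul (a2gen i) F) G p"
    using p by (simp add: a2mul_gen_left)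
qed

lemma adw_append: "adelta_word (w1 @ w2) = a2mul (adelta_word w1) (adelta_word w2)"
  by (induction w1) (simp_all add: adw_nil a2mul_one_left adw_cons assoc_gen)

lemma adw_snoc: "adelta_word (w @ [j]) = a2mul (adelta_word w) (a2gen j)"
  by (simp add: adw_append adw_single)




lemma adelta_sum:
  assumes "finite S" "{w. f w \<noteq> 0} \<subseteq> S"
  shows "adelta f p = (\<Sum>w\<in>S. f w * adelta_word w p)"
  unfolding adelta_def
  by (rule sum.mono_neutral_left) (use assms in auto)

lemma adelta_lin:
  assumes "finite {w. f w \<noteq> 0}" "finite {w. g w \<noteq> 0}"
  shows "adelta (\<lambda>w. c * f w + d * g w) p = c * adelta f p + d * adelta g p"
proof -
  let ?S = "{w. f w \<noteq> 0} \<union> {w. g w \<noteq> 0}"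
  have fS: "finite ?S" using assms by simp
  have "adelta (\<lambda>w. c * f w + d * g w) p = (\<Sum>w\<in>?S. (c * f w + d * g w) * adelta_word w p)"
    by (rule adelta_sum[OF fS]) auto
  also have "\<dots> = c * (\<Sum>w\<in>?S. f w * adelta_word w p) + d * (\<Sum>w\<in>?S. g w * adelta_word w p)"
    by (simp add: sum.distrib sum_distrib_left algebra_simps)
  also have "\<dots> = c * adelta f p + d * adelta g p"
    by (simp add: adelta_sum[OF fS])
  finally show ?thesis .
qed

lemma take_len_le: "take (length x) w = x \<Longrightarrow> length x \<le> length w"
proof -
  assume x: "take (length x) w = x"
  have "length (take (length x) w) = length x" using x by (rule arg_cong)
  then show ?thesis by (simp add: min_def split: if_splits)
qed

lemma amul_alt:
  assumes A: "finite A" "{w. f w \<noteq> 0} \<subseteq> A" and B: "finite B" "{w. g w \<noteq> 0} \<subseteq> B"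
  shows "amul f g w = (\<Sum>x\<in>A. \<Sum>y\<in>B. if x @ y = w then f x * g y else 0)"
proof -
  have eq: "\<And>x y. (x @ y = w) = (take (length x) w = x \<and> y = drop (length x) w)"
    by (auto simp: append_eq_conv_conj)
  have "(\<Sum>x\<in>A. \<Sum>y\<in>B. if x @ y = w then f x * g y else 0)
      = (\<Sum>x\<in>A. if take (length x) w = x then f x * g (drop (length x) w) else 0)"
  proof (rule sum.cong[OF refl])
    fix x
    have "(\<Sum>y\<in>B. if x @ y = w then f x * g y else 0)
        = (\<Sum>y\<in>B. if y = drop (length x) w then (if take (length x) w = x then f x * g y else 0) else 0)"
      by (rule sum.cong[OF refl]) (auto simp: eq)
    also have "\<dots> = (if take (length x) w = x then f x * g (drop (length x) w) else 0)"
    proof -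
      have gB: "\<And>y. y \<notin> B \<Longrightarrow> g y = 0" using B by auto
      show ?thesis using B(1) by (cases "drop (length x) w \<in> B") (simp_all add: sum.delta gB)
    qed
    finally show "(\<Sum>y\<in>B. if x @ y = w then f x * g y else 0) = \<dots>" .
  qed
  also have "\<dots> = (\<Sum>x\<in>{x\<in>A. take (length x) w = x}. f x * g (drop (length x) w))"
    using A by (simp only: sum.inter_filter)
  also have "\<dots> = (\<Sum>x\<in>{x. take (length x) w = x}. f x * g (drop (length x) w))"
  proof (rule sum.mono_neutral_left)
    have "{x. take (length x) w = x} = (\<lambda>k. take k w) ` {..length w}"
    proof (intro set_eqI iffI)
      fix x assume "x \<in> {x. take (length x) w = x}"
      then have x: "take (length x) w = x" by simp
      then have "length x \<le> length w" by (rule take_len_le)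
      then show "x \<in> (\<lambda>k. take k w) ` {..length w}" using x by force
    next
      fix x assume "x \<in> (\<lambda>k. take k w) ` {..length w}"
      then show "x \<in> {x. take (length x) w = x}" by auto
    qed
    then show "finite {x. take (length x) w = x}" by simp
  next
    show "{x \<in> A. take (length x) w = x} \<subseteq> {x. take (length x) w = x}" by blast
  next
    show "\<forall>x\<in>{x. take (length x) w = x} - {x \<in> A. take (length x) w = x}. f x * g (drop (length x) w) = 0"
    proof
      fix x assume "x \<in> {x. take (length x) w = x} - {x \<in> A. take (length x) w = x}"
      then have "x \<notin> A" by blast
      moreover have "\<forall>x. f x \<noteq> 0 \<longrightarrow> x \<in> A" using A(2) by blast
      ultimately have "f x = 0" by blast
      then show "f x * g (drop (length x) w) = 0" by simp
    qed
  qed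
  also have "\<dots> = (\<Sum>k\<le>length w. f (take k w) * g (drop k w))"
  proof -
    have inj: "inj_on (\<lambda>k. take k w) {..length w}"
    proof (rule inj_onI)
      fix k k' assume "k \<in> {..length w}" "k' \<in> {..length w}" "take k w = take k' w"
      then have "length (take k w) = length (take k' w)" "k \<le> length w" "k' \<le> length w" by simp_all
      then show "k = k'" by simp
    qed
    have img: "(\<lambda>k. take k w) ` {..length w} = {x. take (length x) w = x}"
    proof (intro set_eqI iffI)
      fix x assume "x \<in> {x. take (length x) w = x}"
      then have x: "take (length x) w = x" by simp
      then have "length x \<le> length w" by (rule take_len_le)
      then show "x \<in> (\<lambda>k. take k w) ` {..length w}" using x by force
    next
      fix x assume "x \<in> (\<lambda>k. take k w) ` {..length w}"
      then show "x \<in> {x. take (length x) w = x}" by auto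
    qed
    show ?thesis
      unfolding img[symmetric] by (simp add: sum.reindex[OF inj])
  qed
  finally show ?thesis unfolding amul_def by simp
qed

lemma supp_amul:
  "{w. amul f g w \<noteq> 0} \<subseteq> (\<lambda>(x, y). x @ y) ` ({w. f w \<noteq> 0} \<times> {w. g w \<noteq> 0})"
proof
  fix w assume "w \<in> {w. amul f g w \<noteq> 0}"
  then have "(\<Sum>k\<le>length w. f (take k w) * g (drop k w)) \<noteq> 0" by (simp add: amul_def)
  then obtain k where "f (take k w) * g (drop k w) \<noteq> 0"
    by (meson sum.not_neutral_contains_not_neutral)
  then have "f (take k w) \<noteq> 0" "g (drop k w) \<noteq> 0" by auto
  then show "w \<in> (\<lambda>(x, y). x @ y) ` ({w. f w \<noteq> 0} \<times> {w. g w \<noteq> 0})"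
    by (intro image_eqI[of _ _ "(take k w, drop k w)"]) auto
qed

lemma finite_supp_amul:
  "finite {w. f w \<noteq> 0} \<Longrightarrow> finite {w. g w \<noteq> 0} \<Longrightarrow> finite {w. amul f g w \<noteq> 0}"
  by (rule finite_subset[OF supp_amul]) auto

lemma sum_swap4:
  "(\<Sum>k\<in>K. \<Sum>l\<in>L. \<Sum>x\<in>A. \<Sum>y\<in>B. h k l x y) = (\<Sum>x\<in>A. \<Sum>y\<in>B. \<Sum>k\<in>K. \<Sum>l\<in>L. h k l x y)"
proof -
  have "(\<Sum>k\<in>K. \<Sum>l\<in>L. \<Sum>x\<in>A. \<Sum>y\<in>B. h k l x y) = (\<Sum>k\<in>K. \<Sum>x\<in>A. \<Sum>l\<in>L. \<Sum>y\<in>B. h k l x y)"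
    by (rule sum.cong[OF refl]) (rule sum.swap)
  also have "\<dots> = (\<Sum>k\<in>K. \<Sum>x\<in>A. \<Sum>y\<in>B. \<Sum>l\<in>L. h k l x y)"
    by (rule sum.cong[OF refl], rule sum.cong[OF refl]) (rule sum.swap)
  also have "\<dots> = (\<Sum>x\<in>A. \<Sum>k\<in>K. \<Sum>y\<in>B. \<Sum>l\<in>L. h k l x y)"
    by (rule sum.swap)
  also have "\<dots> = (\<Sum>x\<in>A. \<Sum>y\<in>B. \<Sum>k\<in>K. \<Sum>l\<in>L. h k l x y)"
    by (rule sum.cong[OF refl]) (rule sum.swap)
  finally show ?thesis .
qed

lemma prod_sums: "(\<Sum>x\<in>A. c x * a x :: 'a::comm_ring_1) * (\<Sum>y\<in>B. d y * b y) = (\<Sum>x\<in>A. \<Sum>y\<in>B. c x * d y * (a x * b y))"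
  by (simp add: sum_product mult_ac)

lemma a2mul_sums:
  assumes "finite A" "finite B"
  shows "a2mul (\<lambda>p. \<Sum>x\<in>A. c x * F x p) (\<lambda>p. \<Sum>y\<in>B. d y * G y p) p
       = (\<Sum>x\<in>A. \<Sum>y\<in>B. c x * d y * a2mul (F x) (G y) p)"
proof -
  have "a2mul (\<lambda>p. \<Sum>x\<in>A. c x * F x p) (\<lambda>p. \<Sum>y\<in>B. d y * G y p) p
     = (\<Sum>k\<le>length (fst p). \<Sum>l\<le>length (snd p). \<Sum>x\<in>A. \<Sum>y\<in>B.
          c x * d y * (F x (take k (fst p), take l (snd p)) * G y (drop k (fst p), drop l (snd p))))"
    unfolding a2mul_def by (simp only: prod_sums)
  also have "\<dots> = (\<Sum>x\<in>A. \<Sum>y\<in>B. \<Sum>k\<le>length (fst p). \<Sum>l\<le>length (snd p).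
          c x * d y * (F x (take k (fst p), take l (snd p)) * G y (drop k (fst p), drop l (snd p))))"
    by (rule sum_swap4)
  also have "\<dots> = (\<Sum>x\<in>A. \<Sum>y\<in>B. c x * d y * a2mul (F x) (G y) p)"
    unfolding a2mul_def by (simp add: sum_distrib_left)
  finally show ?thesis .
qed




lemma adelta_fun:
  assumes "finite S" "{w. f w \<noteq> 0} \<subseteq> S"
  shows "adelta f = (\<lambda>p. \<Sum>w\<in>S. f w * adelta_word w p)"
  using adelta_sum[OF assms] by blast

lemma adelta_amul:
  assumes fA: "finite {w. f w \<noteq> 0}" and fB: "finite {w. g w \<noteq> 0}"
  shows "adelta (amul f g) p = a2mul (adelta f) (adelta g) p"
proof -
  define A where "A = {w. f w \<noteq> 0}"
  define B where "B = {w. g w \<noteq> 0}"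
  define C where "C = (\<lambda>(x, y). x @ y) ` (A \<times> B)"
  have A: "finite A" "{w. f w \<noteq> 0} \<subseteq> A" using fA by (auto simp: A_def)
  have B: "finite B" "{w. g w \<noteq> 0} \<subseteq> B" using fB by (auto simp: B_def)
  have Cf: "finite C" using A B by (simp add: C_def)
  have CS: "{w. amul f g w \<noteq> 0} \<subseteq> C" using supp_amul[of f g] by (simp add: C_def A_def B_def)
  have "adelta (amul f g) p = (\<Sum>w\<in>C. amul f g w * adelta_word w p)"
    by (rule adelta_sum[OF Cf CS])
  also have "\<dots> = (\<Sum>w\<in>C. \<Sum>x\<in>A. \<Sum>y\<in>B. if x @ y = w then f x * g y * adelta_word w p else 0)"
    by (simp add: amul_alt[OF A B] sum_distrib_right if0_mult)
  also have "\<dots> = (\<Sum>x\<in>A. \<Sum>y\<in>B. \<Sum>w\<in>C. if x @ y = w then f x * g y * adelta_word w p else 0)"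
  proof -
    have "(\<Sum>w\<in>C. \<Sum>x\<in>A. \<Sum>y\<in>B. if x @ y = w then f x * g y * adelta_word w p else 0)
       = (\<Sum>x\<in>A. \<Sum>w\<in>C. \<Sum>y\<in>B. if x @ y = w then f x * g y * adelta_word w p else 0)"
      by (rule sum.swap)
    also have "\<dots> = (\<Sum>x\<in>A. \<Sum>y\<in>B. \<Sum>w\<in>C. if x @ y = w then f x * g y * adelta_word w p else 0)"
      by (rule sum.cong[OF refl]) (rule sum.swap)
    finally show ?thesis .
  qed
  also have "\<dots> = (\<Sum>x\<in>A. \<Sum>y\<in>B. f x * g y * adelta_word (x @ y) p)"
  proof (intro sum.cong refl)
    fix x y assume "x \<in> A" "y \<in> B"
    then have "x @ y \<in> C" by (auto simp: C_def)
    then show "(\<Sum>w\<in>C. if x @ y = w then f x * g y * adelta_word w p else 0) = f x * g y * adelta_word (x @ y) p"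
      using Cf by (simp add: sum.delta)
  qed
  also have "\<dots> = (\<Sum>x\<in>A. \<Sum>y\<in>B. f x * g y * a2mul (adelta_word x) (adelta_word y) p)"
    by (simp add: adw_append)
  also have "\<dots> = a2mul (\<lambda>p. \<Sum>x\<in>A. f x * adelta_word x p) (\<lambda>p. \<Sum>y\<in>B. g y * adelta_word y p) p"
    by (rule a2mul_sums[OF A(1) B(1), symmetric])
  also have "\<dots> = a2mul (adelta f) (adelta g) p"
    by (simp add: adelta_fun[OF A] adelta_fun[OF B])
  finally show ?thesis .
qed

lemma a2mul_tt: "a2mul (atens_one f) (atens_one g) p = atens_one (amul f g) p"
proof -
  obtain u v where p: "p = (u, v)" by (cases p)
  show ?thesis
  proof (cases v)
    case Nil then show ?thesis by (simp add: p a2mul_def atens_one_def amul_def)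
  next
    case (Cons y v')
    have "\<And>k l. l \<le> length v \<Longrightarrow> (if snd (take k u, take l v) = [] then f (fst (take k u, take l v)) else 0) *
         (if snd (drop k u, drop l v) = [] then g (fst (drop k u, drop l v)) else 0) = 0"
      using Cons by auto
    then show ?thesis by (simp add: p a2mul_def atens_one_def Cons del: take_Suc_Cons drop_Suc_Cons)
  qed
qed

lemma a2mul_oo: "a2mul (aone_tens f) (aone_tens g) p = aone_tens (amul f g) p"
proof -
  obtain u v where p: "p = (u, v)" by (cases p)
  show ?thesis
  proof (cases u)
    case Nil then show ?thesis by (simp add: p a2mul_def aone_tens_def amul_def)
  next
    case (Cons y u')
    have "\<And>k l. k \<le> length u \<Longrightarrow> (if fst (take k u, take l v) = [] then f (snd (take k u, take l v)) else 0) *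
         (if fst (drop k u, drop l v) = [] then g (snd (drop k u, drop l v)) else 0) = 0"
      using Cons by auto
    then show ?thesis by (simp add: p a2mul_def aone_tens_def Cons del: take_Suc_Cons drop_Suc_Cons)
  qed
qed

lemma a2mul_to: "a2mul (atens_one f) (aone_tens g) p = f (fst p) * g (snd p)"
proof -
  obtain u v where p: "p = (u, v)" by (cases p)
  have "a2mul (atens_one f) (aone_tens g) (u, v) = (\<Sum>k\<le>length u. if drop k u = [] then
      (\<Sum>l\<le>length v. if take l v = [] then f (take k u) * g (drop l v) else 0) else 0)"
    unfolding a2mul_def atens_one_def aone_tens_def fst_conv snd_conv sum_if_const[symmetric]
    by (intro sum.cong refl) simp
  also have "\<dots> = f u * g v"
    by (simp only: sum_take_nil sum_drop_nil) simp
  finally show ?thesis using p by simp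
qed

lemma a2mul_ot: "a2mul (aone_tens f) (atens_one g) p = g (fst p) * f (snd p)"
proof -
  obtain u v where p: "p = (u, v)" by (cases p)
  have "a2mul (aone_tens f) (atens_one g) (u, v) = (\<Sum>k\<le>length u. if take k u = [] then
      (\<Sum>l\<le>length v. if drop l v = [] then g (drop k u) * f (take l v) else 0) else 0)"
    unfolding a2mul_def atens_one_def aone_tens_def fst_conv snd_conv sum_if_const[symmetric]
    by (intro sum.cong refl) (simp add: mult.commute)
  also have "\<dots> = g u * f v"
    by (simp only: sum_take_nil sum_drop_nil) simp
  finally show ?thesis using p by simp
qed

lemma a2mul_add_left: "a2mul (\<lambda>p. F p + G p) H p = a2mul F H p + a2mul G H p"
  by (simp add: a2mul_def distrib_right sum.distrib)

lemma a2mul_add_right: "a2mul H (\<lambda>p. F p + G p) p = a2mul H F p + a2mul H G p"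
  by (simp add: a2mul_def distrib_left sum.distrib)

lemma finite_supp_add: "finite {w. f w \<noteq> 0} \<Longrightarrow> finite {w. g w \<noteq> 0} \<Longrightarrow> finite {w. c * f w + d * g w \<noteq> (0::'k::comm_ring_1)}"
  by (rule finite_subset[of _ "{w. f w \<noteq> 0} \<union> {w. g w \<noteq> 0}"]) auto

lemma lie_aprim: "f \<in> lie_polys \<Longrightarrow> aprim (f :: 'k::comm_ring_1 assoc)"
proof (induction rule: lie_polys.induct)
  case (gen i)
  let ?f = "(\<lambda>w. if w = [i] then 1 else 0) :: 'k assoc"
  have S: "{w. ?f w \<noteq> 0} = {[i]}" by auto
  have "adelta ?f p = atens_one ?f p + aone_tens ?f p" for p
  proof -
    have "adelta ?f p = adelta_word [i] p" unfolding adelta_def S by simp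
    also have "\<dots> = a2gen i p" by (simp add: adw_single)
    finally show ?thesis by (cases p) (auto simp: a2gen_def atens_one_def aone_tens_def)
  qed
  then show ?case unfolding aprim_def S by auto
next
  case (add f g)
  then have ff: "finite {w. f w \<noteq> 0}" "finite {w. g w \<noteq> 0}" by (auto simp: aprim_def)
  have fin: "finite {w. f w + g w \<noteq> 0}" using finite_supp_add[OF ff, of 1 1] by simp
  have "adelta (\<lambda>w. f w + g w) p = adelta f p + adelta g p" for p
    using adelta_lin[OF ff, of 1 1 p] by simp
  then show ?case using add.IH fin unfolding aprim_def
    by (auto simp: atens_one_def aone_tens_def fun_eq_iff)
next
  case (smult f c)
  then have ff: "finite {w. f w \<noteq> 0}" by (auto simp: aprim_def)
  have fin: "finite {w. c * f w \<noteq> 0}" using finite_supp_add[OF ff ff, of c 0] by simp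
  have "adelta (\<lambda>w. c * f w) p = c * adelta f p" for p
    using adelta_lin[OF ff ff, of c 0 p] by simp
  then show ?case using smult.IH fin unfolding aprim_def
    by (auto simp: atens_one_def aone_tens_def fun_eq_iff)
next
  case (bracket f g)
  then have ff: "finite {w. f w \<noteq> 0}" "finite {w. g w \<noteq> 0}" by (auto simp: aprim_def)
  have Df: "adelta f = (\<lambda>p. atens_one f p + aone_tens f p)" using bracket.IH by (simp add: aprim_def)
  have Dg: "adelta g = (\<lambda>p. atens_one g p + aone_tens g p)" using bracket.IH by (simp add: aprim_def)
  have f1: "finite {w. amul f g w \<noteq> 0}" "finite {w. amul g f w \<noteq> 0}"
    using finite_supp_amul ff by blast+
  have fin: "finite {w. amul f g w - amul g f w \<noteq> 0}" using finite_supp_add[OF f1, of 1 "-1"] by simp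
  have "adelta (\<lambda>w. amul f g w - amul g f w) p = adelta (amul f g) p - adelta (amul g f) p" for p
    using adelta_lin[OF f1, of 1 "-1" p] by simp
  also have "\<dots> p = a2mul (adelta f) (adelta g) p - a2mul (adelta g) (adelta f) p" for p
    by (simp add: adelta_amul ff)
  also have "\<dots> p = atens_one (\<lambda>w. amul f g w - amul g f w) p + aone_tens (\<lambda>w. amul f g w - amul g f w) p" for p
    unfolding Df Dg a2mul_add_left a2mul_add_right a2mul_tt a2mul_oo a2mul_to a2mul_ot
    by (simp add: atens_one_def aone_tens_def algebra_simps)
  finally show ?case using fin unfolding aprim_def by auto
qed




lemma mmul_MOne_right[simp]: "mmul a MOne = a"
  by (cases a) auto

lemma mmul_eq: "mmul a c = (if a = MOne then c else if c = MOne then a else MMul a c)"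
  by (cases a; cases c) auto

lemma finite_D: "finite {(a, c). mmul a c = s}"
proof (rule finite_subset)
  show "{(a, c). mmul a c = s} \<subseteq> {(MOne, s), (s, MOne)} \<union> (case s of MMul x y \<Rightarrow> {(x, y)} | _ \<Rightarrow> {})"
    by (auto simp: mmul_eq split: if_splits)
  show "finite ({(MOne, s), (s, MOne)} \<union> (case s of MMul x y \<Rightarrow> {(x, y)} | _ \<Rightarrow> {}))"
    by (cases s) auto
qed

lemma sum_D_snd:
  "(\<Sum>(a, c)\<in>{(a, c). mmul a c = s}. if c = X then h a else 0) = (\<Sum>a\<in>{a. mmul a X = s}. h a)"
proof -
  have "(\<Sum>(a, c)\<in>{(a, c). mmul a c = s}. if c = X then h a else 0)
      = (\<Sum>p\<in>{(a, c). mmul a c = s}. if snd p = X then h (fst p) else 0)"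
    by (rule sum.cong) auto
  also have "\<dots> = (\<Sum>p\<in>{p\<in>{(a, c). mmul a c = s}. snd p = X}. h (fst p))"
    by (rule sum.inter_filter[OF finite_D, symmetric])
  also have "{p\<in>{(a, c). mmul a c = s}. snd p = X} = (\<lambda>a. (a, X)) ` {a. mmul a X = s}"
    by auto
  also have "(\<Sum>p\<in>(\<lambda>a. (a, X)) ` {a. mmul a X = s}. h (fst p)) = (\<Sum>a\<in>{a. mmul a X = s}. h a)"
    by (subst sum.reindex) (auto intro: inj_onI)
  finally show ?thesis .
qed

lemma sum_D_fst:
  "(\<Sum>(a, c)\<in>{(a, c). mmul a c = s}. if a = X then h c else 0) = (\<Sum>c\<in>{c. mmul X c = s}. h c)"
proof -
  have "(\<Sum>(a, c)\<in>{(a, c). mmul a c = s}. if a = X then h c else 0)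
      = (\<Sum>p\<in>{(a, c). mmul a c = s}. if fst p = X then h (snd p) else 0)"
    by (rule sum.cong) auto
  also have "\<dots> = (\<Sum>p\<in>{p\<in>{(a, c). mmul a c = s}. fst p = X}. h (snd p))"
    by (rule sum.inter_filter[OF finite_D, symmetric])
  also have "{p\<in>{(a, c). mmul a c = s}. fst p = X} = (\<lambda>c. (X, c)) ` {c. mmul X c = s}"
    by auto
  also have "(\<Sum>p\<in>(\<lambda>c. (X, c)) ` {c. mmul X c = s}. h (snd p)) = (\<Sum>c\<in>{c. mmul X c = s}. h c)"
    by (subst sum.reindex) (auto intro: inj_onI)
  finally show ?thesis .
qed

lemma set_MOne_right: "{a. mmul a MOne = s} = {s}" by auto
lemma set_MOne_left: "{c. mmul MOne c = s} = {s}" by auto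

lemma m2mul_gen_right:
  "m2mul F (m2gen j) (s, t) = (\<Sum>a\<in>{a. mmul a (MX j) = s}. F (a, t)) + (\<Sum>b\<in>{b. mmul b (MX j) = t}. F (s, b))"
proof -
  have inner: "(\<Sum>(b, d)\<in>{(b, d). mmul b d = t}. F (a, b) * m2gen j (c, d))
     = (if c = MX j then F (a, t) else 0) + (if c = MOne then (\<Sum>b\<in>{b. mmul b (MX j) = t}. F (a, b)) else 0)" for a c
  proof -
    have "(\<Sum>(b, d)\<in>{(b, d). mmul b d = t}. F (a, b) * m2gen j (c, d))
      = (\<Sum>(b, d)\<in>{(b, d). mmul b d = t}. (if c = MX j then (if d = MOne then F (a, b) else 0) else 0)
          + (if c = MOne then (if d = MX j then F (a, b) else 0) else 0))"
      by (rule sum.cong) (auto simp: m2gen_def)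
    also have "\<dots> = (if c = MX j then (\<Sum>(b, d)\<in>{(b, d). mmul b d = t}. if d = MOne then F (a, b) else 0) else 0)
       + (if c = MOne then (\<Sum>(b, d)\<in>{(b, d). mmul b d = t}. if d = MX j then F (a, b) else 0) else 0)"
      by (simp add: sum.distrib split_def)
    also have "\<dots> = (if c = MX j then F (a, t) else 0) + (if c = MOne then (\<Sum>b\<in>{b. mmul b (MX j) = t}. F (a, b)) else 0)"
      by (simp only: sum_D_snd set_MOne_right) simp
    finally show ?thesis .
  qed
  have "m2mul F (m2gen j) (s, t) = (\<Sum>(a, c)\<in>{(a, c). mmul a c = s}.
      (if c = MX j then F (a, t) else 0) + (if c = MOne then (\<Sum>b\<in>{b. mmul b (MX j) = t}. F (a, b)) else 0))"
    unfolding m2mul_def fst_conv snd_conv by (rule sum.cong[OF refl]) (auto simp: inner)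
  also have "\<dots> = (\<Sum>(a, c)\<in>{(a, c). mmul a c = s}. if c = MX j then F (a, t) else 0)
     + (\<Sum>(a, c)\<in>{(a, c). mmul a c = s}. if c = MOne then (\<Sum>b\<in>{b. mmul b (MX j) = t}. F (a, b)) else 0)"
    by (simp add: sum.distrib split_def)
  also have "\<dots> = (\<Sum>a\<in>{a. mmul a (MX j) = s}. F (a, t)) + (\<Sum>b\<in>{b. mmul b (MX j) = t}. F (s, b))"
    by (simp only: sum_D_snd set_MOne_right) simp
  finally show ?thesis .
qed

lemma m2mul_gen_left:
  "m2mul (m2gen i) F (s, t) = (\<Sum>c\<in>{c. mmul (MX i) c = s}. F (c, t)) + (\<Sum>d\<in>{d. mmul (MX i) d = t}. F (s, d))"
proof -
  have inner: "(\<Sum>(b, d)\<in>{(b, d). mmul b d = t}. m2gen i (a, b) * F (c, d))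
     = (if a = MX i then F (c, t) else 0) + (if a = MOne then (\<Sum>d\<in>{d. mmul (MX i) d = t}. F (c, d)) else 0)" for a c
  proof -
    have "(\<Sum>(b, d)\<in>{(b, d). mmul b d = t}. m2gen i (a, b) * F (c, d))
      = (\<Sum>(b, d)\<in>{(b, d). mmul b d = t}. (if a = MX i then (if b = MOne then F (c, d) else 0) else 0)
          + (if a = MOne then (if b = MX i then F (c, d) else 0) else 0))"
      by (rule sum.cong) (auto simp: m2gen_def)
    also have "\<dots> = (if a = MX i then (\<Sum>(b, d)\<in>{(b, d). mmul b d = t}. if b = MOne then F (c, d) else 0) else 0)
       + (if a = MOne then (\<Sum>(b, d)\<in>{(b, d). mmul b d = t}. if b = MX i then F (c, d) else 0) else 0)"
      by (simp add: sum.distrib split_def)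
    also have "\<dots> = (if a = MX i then F (c, t) else 0) + (if a = MOne then (\<Sum>d\<in>{d. mmul (MX i) d = t}. F (c, d)) else 0)"
      by (simp only: sum_D_fst set_MOne_left) simp
    finally show ?thesis .
  qed
  have "m2mul (m2gen i) F (s, t) = (\<Sum>(a, c)\<in>{(a, c). mmul a c = s}.
      (if a = MX i then F (c, t) else 0) + (if a = MOne then (\<Sum>d\<in>{d. mmul (MX i) d = t}. F (c, d)) else 0))"
    unfolding m2mul_def fst_conv snd_conv by (rule sum.cong[OF refl]) (auto simp: inner)
  also have "\<dots> = (\<Sum>(a, c)\<in>{(a, c). mmul a c = s}. if a = MX i then F (c, t) else 0)
     + (\<Sum>(a, c)\<in>{(a, c). mmul a c = s}. if a = MOne then (\<Sum>d\<in>{d. mmul (MX i) d = t}. F (c, d)) else 0)"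
    by (simp add: sum.distrib split_def)
  also have "\<dots> = (\<Sum>c\<in>{c. mmul (MX i) c = s}. F (c, t)) + (\<Sum>d\<in>{d. mmul (MX i) d = t}. F (s, d))"
    by (simp only: sum_D_fst set_MOne_left) simp
  finally show ?thesis .
qed




lemma leaves_foldl: "leaves (foldl (\<lambda>t j. MMul t (MX j)) t0 is) = leaves t0 @ is"
  by (induction "is" arbitrary: t0) auto

lemma leaves_lnorm[simp]: "leaves (lnorm w) = w"
  by (cases w) (auto simp: leaves_foldl)

lemma leaves_rnorm[simp]: "leaves (rnorm w) = w"
  by (induction w rule: rnorm.induct) auto

lemma lnorm_snoc: "lnorm (w @ [j]) = (if w = [] then MX j else MMul (lnorm w) (MX j))"
  by (cases w) auto

lemma rnorm_cons: "rnorm (i # w) = (if w = [] then MX i else MMul (MX i) (rnorm w))"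
  by (cases w) auto

lemma lnorm_MOne_iff: "(lnorm w = MOne) = (w = [])"
  by (metis leaves.simps(1) leaves_lnorm lnorm.simps(1))

lemma rnorm_MOne_iff: "(rnorm w = MOne) = (w = [])"
  by (metis leaves.simps(1) leaves_rnorm rnorm.simps(1))

lemma isL_MMul:
  "(lnorm (leaves (MMul x y)) = MMul x y) = ((\<exists>k. y = MX k) \<and> x \<noteq> MOne \<and> lnorm (leaves x) = x)"
proof
  assume h: "lnorm (leaves (MMul x y)) = MMul x y"
  let ?v = "leaves x @ leaves y"
  have v: "lnorm ?v = MMul x y" using h by simp
  have "?v \<noteq> []" using v by (auto simp: lnorm_MOne_iff[symmetric])
  then obtain v' k where vk: "?v = v' @ [k]" by (metis rev_exhaust)
  then have "lnorm (v' @ [k]) = MMul x y" using v by simp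
  then have v': "v' \<noteq> []" "x = lnorm v'" "y = MX k" by (auto simp: lnorm_snoc split: if_splits)
  then have "leaves x = v'" using vk by simp
  then show "(\<exists>k. y = MX k) \<and> x \<noteq> MOne \<and> lnorm (leaves x) = x"
    using v' by (auto simp: lnorm_MOne_iff)
next
  assume h: "(\<exists>k. y = MX k) \<and> x \<noteq> MOne \<and> lnorm (leaves x) = x"
  then obtain k where k: "y = MX k" by blast
  have "leaves x \<noteq> []" using h by (metis lnorm.simps(1))
  then show "lnorm (leaves (MMul x y)) = MMul x y" using h k by (simp add: lnorm_snoc)
qed

lemma isR_MMul:
  "(rnorm (leaves (MMul x y)) = MMul x y) = ((\<exists>i. x = MX i) \<and> y \<noteq> MOne \<and> rnorm (leaves y) = y)"
proof
  assume h: "rnorm (leaves (MMul x y)) = MMul x y"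
  let ?v = "leaves x @ leaves y"
  have v: "rnorm ?v = MMul x y" using h by simp
  have "?v \<noteq> []" using v by (auto simp: rnorm_MOne_iff[symmetric])
  then obtain v' k where vk: "?v = k # v'" by (metis list.exhaust)
  then have "rnorm (k # v') = MMul x y" using v by simp
  then have v': "v' \<noteq> []" "y = rnorm v'" "x = MX k" by (auto simp: rnorm_cons split: if_splits)
  then have "leaves y = v'" using vk by simp
  then show "(\<exists>i. x = MX i) \<and> y \<noteq> MOne \<and> rnorm (leaves y) = y"
    using v' by (auto simp: rnorm_MOne_iff)
next
  assume h: "(\<exists>i. x = MX i) \<and> y \<noteq> MOne \<and> rnorm (leaves y) = y"
  then obtain k where k: "x = MX k" by blast
  have "leaves y \<noteq> []" using h by (metis rnorm.simps(1))
  then show "rnorm (leaves (MMul x y)) = MMul x y" using h k by (simp add: rnorm_cons)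
qed

lemma isL_MMul': "(lnorm (leaves x @ leaves y) = MMul x y) = ((\<exists>k. y = MX k) \<and> x \<noteq> MOne \<and> lnorm (leaves x) = x)"
  using isL_MMul by simp

lemma isR_MMul': "(rnorm (leaves x @ leaves y) = MMul x y) = ((\<exists>i. x = MX i) \<and> y \<noteq> MOne \<and> rnorm (leaves y) = y)"
  using isR_MMul by simp

lemma set_right_gen: "{a. mmul a (MX j) = s} = (case s of MOne \<Rightarrow> {} | MX i \<Rightarrow> if i = j then {MOne} else {}
   | MMul x y \<Rightarrow> if x \<noteq> MOne \<and> y = MX j then {x} else {})"
  by (cases s) (auto simp: mmul_eq)

lemma set_left_gen: "{c. mmul (MX i) c = s} = (case s of MOne \<Rightarrow> {} | MX k \<Rightarrow> if k = i then {MOne} else {}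
   | MMul x y \<Rightarrow> if x = MX i \<and> y \<noteq> MOne then {y} else {})"
  by (cases s) (auto simp: mmul_eq)

lemma sum_right_gen:
  "(\<Sum>a\<in>{a. mmul a (MX j) = s}. if lnorm (leaves a) = a then H (leaves a) else 0)
   = (if lnorm (leaves s) = s \<and> leaves s \<noteq> [] \<and> last (leaves s) = j then H (butlast (leaves s)) else 0)"
proof (cases s)
  case MOne then show ?thesis by (simp add: set_right_gen)
next
  case (MX i) then show ?thesis by (simp add: set_right_gen)
next
  case (MMul x y)
  show ?thesis
  proof (cases "x \<noteq> MOne \<and> y = MX j")
    case True
    have set: "{a. mmul a (MX j) = s} = {x}" using True MMul by (auto simp: mmul_eq)
    have iff: "(lnorm (leaves s) = s) = (lnorm (leaves x) = x)"
      unfolding MMul using isL_MMul[of x y] True by blast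
    have ls: "leaves s = leaves x @ [j]" using MMul True by simp
    show ?thesis unfolding set iff by (simp add: ls)
  next
    case False
    have set: "{a. mmul a (MX j) = s} = {}" using False MMul by (auto simp: mmul_eq)
    have "\<not> (lnorm (leaves s) = s \<and> leaves s \<noteq> [] \<and> last (leaves s) = j)"
    proof
      assume h: "lnorm (leaves s) = s \<and> leaves s \<noteq> [] \<and> last (leaves s) = j"
      then obtain k where k: "y = MX k" "x \<noteq> MOne" unfolding MMul using isL_MMul[of x y] by blast
      then have "last (leaves s) = k" using MMul by simp
      then show False using h k False by simp
    qed
    then show ?thesis unfolding set by (subst if_not_P) simp_all
  qed
qed

lemma sum_left_gen:
  "(\<Sum>c\<in>{c. mmul (MX i) c = s}. if rnorm (leaves c) = c then H (leaves c) else 0)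
   = (if rnorm (leaves s) = s \<and> leaves s \<noteq> [] \<and> hd (leaves s) = i then H (tl (leaves s)) else 0)"
proof (cases s)
  case MOne then show ?thesis by (simp add: set_left_gen)
next
  case (MX k) then show ?thesis by (simp add: set_left_gen)
next
  case (MMul x y)
  show ?thesis
  proof (cases "x = MX i \<and> y \<noteq> MOne")
    case True
    have set: "{c. mmul (MX i) c = s} = {y}" using True MMul by (auto simp: mmul_eq)
    have iff: "(rnorm (leaves s) = s) = (rnorm (leaves y) = y)"
      unfolding MMul using isR_MMul[of x y] True by blast
    have ls: "leaves s = i # leaves y" using MMul True by simp
    show ?thesis unfolding set iff by (simp add: ls)
  next
    case False
    have set: "{c. mmul (MX i) c = s} = {}" using False MMul by (auto simp: mmul_eq)
    have "\<not> (rnorm (leaves s) = s \<and> leaves s \<noteq> [] \<and> hd (leaves s) = i)"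
    proof
      assume h: "rnorm (leaves s) = s \<and> leaves s \<noteq> [] \<and> hd (leaves s) = i"
      then obtain k where k: "x = MX k" "y \<noteq> MOne" unfolding MMul using isR_MMul[of x y] by blast
      then have "hd (leaves s) = k" using MMul by simp
      then show False using h k False by simp
    qed
    then show ?thesis unfolding set by (subst if_not_P) simp_all
  qed
qed




definition B2 :: "(nat list \<Rightarrow> mag) \<Rightarrow> 'k::comm_ring_1 assoc2 \<Rightarrow> 'k magma2" where
  "B2 \<beta> F p = (if \<beta> (leaves (fst p)) = fst p \<and> \<beta> (leaves (snd p)) = snd p then F (leaves (fst p), leaves (snd p)) else 0)"

lemma nilL: "lnorm (leaves t) = t \<Longrightarrow> (leaves t = []) = (t = MOne)"
  by (metis leaves.simps(1) lnorm.simps(1))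

lemma nilR: "rnorm (leaves t) = t \<Longrightarrow> (leaves t = []) = (t = MOne)"
  by (metis leaves.simps(1) rnorm.simps(1))

lemma LN: "m2mul (B2 lnorm F) (m2gen j) = B2 lnorm (a2mul F (a2gen j))"
proof
  fix p :: "mag \<times> mag"
  obtain s t where p: "p = (s, t)" by (cases p)
  have 1: "(\<Sum>a\<in>{a. mmul a (MX j) = s}. B2 lnorm F (a, t))
     = (\<Sum>a\<in>{a. mmul a (MX j) = s}. if lnorm (leaves a) = a then
          (if lnorm (leaves t) = t then F (leaves a, leaves t) else 0) else 0)"
    by (rule sum.cong) (auto simp: B2_def)
  have 2: "(\<Sum>b\<in>{b. mmul b (MX j) = t}. B2 lnorm F (s, b))
     = (\<Sum>b\<in>{b. mmul b (MX j) = t}. if lnorm (leaves b) = b then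
          (if lnorm (leaves s) = s then F (leaves s, leaves b) else 0) else 0)"
    by (rule sum.cong) (auto simp: B2_def)
  show "m2mul (B2 lnorm F) (m2gen j) p = B2 lnorm (a2mul F (a2gen j)) p"
    unfolding p m2mul_gen_right 1 2
    unfolding sum_right_gen[where s=s and H="\<lambda>u. if lnorm (leaves t) = t then F (u, leaves t) else 0"]
      sum_right_gen[where s=t and H="\<lambda>u. if lnorm (leaves s) = s then F (leaves s, u) else 0"]
    unfolding B2_def fst_conv snd_conv a2mul_gen_right
    by (cases "lnorm (leaves s) = s"; cases "lnorm (leaves t) = t") (simp_all add: nilL)
qed

lemma RN: "m2mul (m2gen i) (B2 rnorm F) = B2 rnorm (a2mul (a2gen i) F)"
proof
  fix p :: "mag \<times> mag"
  obtain s t where p: "p = (s, t)" by (cases p)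
  have 1: "(\<Sum>c\<in>{c. mmul (MX i) c = s}. B2 rnorm F (c, t))
     = (\<Sum>c\<in>{c. mmul (MX i) c = s}. if rnorm (leaves c) = c then
          (if rnorm (leaves t) = t then F (leaves c, leaves t) else 0) else 0)"
    by (rule sum.cong) (auto simp: B2_def)
  have 2: "(\<Sum>d\<in>{d. mmul (MX i) d = t}. B2 rnorm F (s, d))
     = (\<Sum>d\<in>{d. mmul (MX i) d = t}. if rnorm (leaves d) = d then
          (if rnorm (leaves s) = s then F (leaves s, leaves d) else 0) else 0)"
    by (rule sum.cong) (auto simp: B2_def)
  show "m2mul (m2gen i) (B2 rnorm F) p = B2 rnorm (a2mul (a2gen i) F) p"
    unfolding p m2mul_gen_left 1 2
    unfolding sum_left_gen[where s=s and H="\<lambda>u. if rnorm (leaves t) = t then F (u, leaves t) else 0"]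
      sum_left_gen[where s=t and H="\<lambda>u. if rnorm (leaves s) = s then F (leaves s, u) else 0"]
    unfolding B2_def fst_conv snd_conv a2mul_gen_left
    by (cases "rnorm (leaves s) = s"; cases "rnorm (leaves t) = t") (simp_all add: nilR)
qed

lemma beta_MOne_iff:
  assumes "\<beta> [] = MOne" "\<And>w. leaves (\<beta> w) = w"
  shows "(\<beta> u = MOne) = (u = [])"
proof
  assume "\<beta> u = MOne"
  then have "leaves (\<beta> u) = []" by simp
  then show "u = []" using assms(2) by simp
next
  assume "u = []" then show "\<beta> u = MOne" using assms(1) by simp
qed

lemma beta_MX_iff:
  assumes "\<And>i. \<beta> [i] = MX i" "\<And>w. leaves (\<beta> w) = w"
  shows "(\<beta> u = MX j) = (u = [j])"
proof
  assume "\<beta> u = MX j"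
  then have "leaves (\<beta> u) = [j]" by simp
  then show "u = [j]" using assms(2) by simp
next
  assume "u = [j]" then show "\<beta> u = MX j" using assms(1) by simp
qed

lemma B2_cases:
  assumes "\<And>w. leaves (\<beta> w) = w"
    and yes: "\<And>u v. B2 \<beta> F (\<beta> u, \<beta> v) = F (u, v) \<Longrightarrow> P (\<beta> u) (\<beta> v)"
    and no: "\<not> (\<beta> (leaves s) = s \<and> \<beta> (leaves t) = t) \<Longrightarrow> B2 \<beta> F (s, t) = 0 \<Longrightarrow> P s t"
  shows "P s t"
proof (cases "\<beta> (leaves s) = s \<and> \<beta> (leaves t) = t")
  case True
  then have s: "s = \<beta> (leaves s)" and t: "t = \<beta> (leaves t)" by simp_all
  have "B2 \<beta> F (\<beta> (leaves s), \<beta> (leaves t)) = F (leaves s, leaves t)"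
    unfolding B2_def fst_conv snd_conv assms(1) by simp
  then have "P (\<beta> (leaves s)) (\<beta> (leaves t))" by (rule yes)
  then show ?thesis using s t by simp
next
  case False
  then have "B2 \<beta> F (s, t) = 0" unfolding B2_def fst_conv snd_conv by (rule if_not_P)
  then show ?thesis using False by (rule no[rotated])
qed

lemma B2_one:
  assumes b0: "\<beta> [] = MOne" and lb: "\<And>w. leaves (\<beta> w) = w"
  shows "B2 \<beta> (a2one :: 'k::comm_ring_1 assoc2) = m2one"
proof
  fix p :: "mag \<times> mag"
  obtain s t where p: "p = (s, t)" by (cases p)
  have "B2 \<beta> (a2one :: 'k assoc2) (s, t) = m2one (s, t)"
  proof (rule B2_cases[where s=s and t=t and F="a2one :: 'k assoc2", OF lb])
    fix u v assume h: "B2 \<beta> (a2one :: 'k assoc2) (\<beta> u, \<beta> v) = a2one (u, v)"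
    show "B2 \<beta> (a2one :: 'k assoc2) (\<beta> u, \<beta> v) = m2one (\<beta> u, \<beta> v)"
      by (rule trans[OF h]) (simp add: a2one_def m2one_def beta_MOne_iff[OF b0 lb])
  next
    assume "\<not> (\<beta> (leaves s) = s \<and> \<beta> (leaves t) = t)" "B2 \<beta> (a2one :: 'k assoc2) (s, t) = 0"
    moreover have "s = MOne \<and> t = MOne \<Longrightarrow> \<beta> (leaves s) = s \<and> \<beta> (leaves t) = t" using b0 by simp
    ultimately show "B2 \<beta> (a2one :: 'k assoc2) (s, t) = m2one (s, t)" unfolding m2one_def by auto
  qed
  then show "B2 \<beta> (a2one :: 'k assoc2) p = m2one p" using p by simp
qed

lemma B2_gen:
  assumes b0: "\<beta> [] = MOne" and b1: "\<And>i. \<beta> [i] = MX i" and lb: "\<And>w. leaves (\<beta> w) = w"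
  shows "B2 \<beta> (a2gen j :: 'k::comm_ring_1 assoc2) = m2gen j"
proof
  fix p :: "mag \<times> mag"
  obtain s t where p: "p = (s, t)" by (cases p)
  have "B2 \<beta> (a2gen j :: 'k assoc2) (s, t) = m2gen j (s, t)"
  proof (rule B2_cases[where s=s and t=t and F="a2gen j :: 'k assoc2", OF lb])
    fix u v assume h: "B2 \<beta> (a2gen j :: 'k assoc2) (\<beta> u, \<beta> v) = a2gen j (u, v)"
    show "B2 \<beta> (a2gen j :: 'k assoc2) (\<beta> u, \<beta> v) = m2gen j (\<beta> u, \<beta> v)"
      by (rule trans[OF h]) (simp add: a2gen_def m2gen_def beta_MOne_iff[OF b0 lb] beta_MX_iff[OF b1 lb])
  next
    assume "\<not> (\<beta> (leaves s) = s \<and> \<beta> (leaves t) = t)" "B2 \<beta> (a2gen j :: 'k assoc2) (s, t) = 0"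
    moreover have "s = MOne \<and> t = MX j \<Longrightarrow> \<beta> (leaves s) = s \<and> \<beta> (leaves t) = t" using b0 b1 by simp
    moreover have "s = MX j \<and> t = MOne \<Longrightarrow> \<beta> (leaves s) = s \<and> \<beta> (leaves t) = t" using b0 b1 by simp
    ultimately show "B2 \<beta> (a2gen j :: 'k assoc2) (s, t) = m2gen j (s, t)" unfolding m2gen_def by auto
  qed
  then show "B2 \<beta> (a2gen j :: 'k assoc2) p = m2gen j p" using p by simp
qed

lemma mdelta_lnorm: "mdelta_basis (lnorm w) = B2 lnorm (adelta_word w)"
proof (induction w rule: rev_induct)
  case Nil then show ?case by (simp add: adw_nil B2_one[of _, OF _ leaves_lnorm] B2_one[of _, OF _ leaves_rnorm])
next
  case (snoc j w)
  show ?case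
  proof (cases "w = []")
    case True
    then show ?thesis by (simp add: adw_single B2_gen[of _, OF _ _ leaves_lnorm] B2_gen[of _, OF _ _ leaves_rnorm])
  next
    case False
    then show ?thesis using snoc.IH by (simp add: lnorm_snoc adw_snoc LN)
  qed
qed

lemma mdelta_rnorm: "mdelta_basis (rnorm w) = B2 rnorm (adelta_word w)"
proof (induction w)
  case Nil then show ?case by (simp add: adw_nil B2_one[of _, OF _ leaves_lnorm] B2_one[of _, OF _ leaves_rnorm])
next
  case (Cons i w)
  show ?case
  proof (cases "w = []")
    case True
    then show ?thesis by (simp add: adw_single B2_gen[of _, OF _ _ leaves_lnorm] B2_gen[of _, OF _ _ leaves_rnorm])
  next
    case False
    then show ?thesis using Cons.IH by (simp add: rnorm_cons adw_cons RN)
  qed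
qed




lemma bracket_closed:
  assumes lb: "\<And>w. leaves (\<beta> w) = w" and fin: "finite {w. f w \<noteq> 0}"
  shows "bracket_image \<beta> f t = (if \<beta> (leaves t) = t then f (leaves t) else 0)"
proof -
  have "bracket_image \<beta> f t = (\<Sum>w\<in>{w. f w \<noteq> 0}. if w = leaves t then (if \<beta> w = t then f w else 0) else 0)"
    unfolding bracket_image_def
  proof (rule sum.cong[OF refl])
    fix w
    show "(if \<beta> w = t then f w else 0) = (if w = leaves t then (if \<beta> w = t then f w else 0) else 0)"
      using lb[of w] by auto
  qed
  also have "\<dots> = (if leaves t \<in> {w. f w \<noteq> 0} then (if \<beta> (leaves t) = t then f (leaves t) else 0) else 0)"
    using fin by (simp add: sum.delta')
  also have "\<dots> = (if \<beta> (leaves t) = t then f (leaves t) else 0)" by auto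
  finally show ?thesis .
qed

lemma mprim_bracket:
  assumes lb: "\<And>w. leaves (\<beta> w) = w" and b0: "\<beta> [] = MOne"
    and norm: "\<And>w. mnormal (\<beta> w)"
    and md: "\<And>w. mdelta_basis (\<beta> w) = (B2 \<beta> (adelta_word w) :: 'k::comm_ring_1 magma2)"
    and prim: "aprim (f :: 'k assoc)"
  shows "mprim (bracket_image \<beta> f)"
proof -
  define S where "S = {w. f w \<noteq> 0}"
  have fin: "finite S" using prim by (simp add: aprim_def S_def)
  have Df: "adelta f = (\<lambda>p. atens_one f p + aone_tens f p)" using prim by (simp add: aprim_def)
  define g where "g = bracket_image \<beta> f"
  have g: "g t = (if \<beta> (leaves t) = t then f (leaves t) else 0)" for t
    unfolding g_def by (rule bracket_closed[OF lb]) (use fin in \<open>simp add: S_def\<close>)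
  have suppg: "{t. g t \<noteq> 0} = \<beta> ` S"
  proof (intro set_eqI iffI)
    fix t assume "t \<in> {t. g t \<noteq> 0}"
    then have c: "\<beta> (leaves t) = t \<and> f (leaves t) \<noteq> 0" using g[of t] by (cases "\<beta> (leaves t) = t") simp_all
    show "t \<in> \<beta> ` S" unfolding S_def using c by (intro image_eqI[of _ _ "leaves t"]) simp_all
  next
    fix t assume "t \<in> \<beta> ` S"
    then obtain w where "t = \<beta> w" "f w \<noteq> 0" unfolding S_def by blast
    then show "t \<in> {t. g t \<noteq> 0}" using g[of t] lb[of w] by simp
  qed
  have inj: "inj_on \<beta> S"
  proof (rule inj_onI)
    fix x y assume "\<beta> x = \<beta> y"
    then have "leaves (\<beta> x) = leaves (\<beta> y)" by simp
    then show "x = y" by (simp add: lb)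
  qed
  have gb: "g (\<beta> w) = f w" for w using g[of "\<beta> w"] lb[of w] by simp
  have fing: "finite {t. g t \<noteq> 0}" using fin suppg by simp
  have normg: "\<forall>t. g t \<noteq> 0 \<longrightarrow> mnormal t"
  proof (intro allI impI)
    fix t assume "g t \<noteq> 0"
    then have "\<beta> (leaves t) = t" using g[of t] by (cases "\<beta> (leaves t) = t") simp_all
    then show "mnormal t" using norm[of "leaves t"] by simp
  qed
  have delta: "mdelta g p = mtens_one g p + mone_tens g p" for p
  proof -
    obtain s t where p: "p = (s, t)" by (cases p)
    have "mdelta g (s, t) = (\<Sum>w\<in>S. g (\<beta> w) * mdelta_basis (\<beta> w) (s, t))"
      unfolding mdelta_def suppg by (simp add: sum.reindex[OF inj])
    also have "\<dots> = (\<Sum>w\<in>S. f w * B2 \<beta> (adelta_word w) (s, t))"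
      by (simp add: gb md)
    also have "\<dots> = (if \<beta> (leaves s) = s \<and> \<beta> (leaves t) = t then
        (\<Sum>w\<in>S. f w * adelta_word w (leaves s, leaves t)) else 0)"
    proof (cases "\<beta> (leaves s) = s \<and> \<beta> (leaves t) = t")
      case True
      then show ?thesis by (simp add: B2_def)
    next
      case False
      have z: "B2 \<beta> (adelta_word w :: 'k assoc2) (s, t) = 0" for w
        unfolding B2_def fst_conv snd_conv using False by (rule if_not_P)
      show ?thesis by (subst if_not_P[OF False]) (simp add: z)
    qed
    also have "\<dots> = (if \<beta> (leaves s) = s \<and> \<beta> (leaves t) = t then adelta f (leaves s, leaves t) else 0)"
      by (simp add: adelta_sum[OF fin] S_def)
    also have "\<dots> = mtens_one g (s, t) + mone_tens g (s, t)"
    proof (cases "\<beta> (leaves s) = s \<and> \<beta> (leaves t) = t")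
      case True
      define u where "u = leaves s"
      define v where "v = leaves t"
      have s: "s = \<beta> u" and t: "t = \<beta> v" using True by (simp_all add: u_def v_def)
      have "adelta f (u, v) = mtens_one g (\<beta> u, \<beta> v) + mone_tens g (\<beta> u, \<beta> v)"
        unfolding Df mtens_one_def mone_tens_def atens_one_def aone_tens_def fst_conv snd_conv gb
        by (simp add: beta_MOne_iff[OF b0 lb])
      then show ?thesis unfolding s t lb by simp
    next
      case False
      have "t = MOne \<Longrightarrow> g s = 0" using False g[of s] b0 by auto
      moreover have "s = MOne \<Longrightarrow> g t = 0" using False g[of t] b0 by auto
      ultimately show ?thesis using False unfolding mtens_one_def mone_tens_def by auto
    qed
    finally show ?thesis using p by simp
  qed
  show ?thesis unfolding g_def[symmetric] mprim_def using fing normg delta by auto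
qed

lemma mnormal_lnorm: "mnormal (lnorm w)"
proof (cases w)
  case Nil then show ?thesis by (simp add: mnormal_def)
next
  case (Cons i xs)
  have "no_one (foldl (\<lambda>t j. MMul t (MX j)) t0 xs)" if "no_one t0" for t0
    using that by (induction xs arbitrary: t0) auto
  then show ?thesis using Cons by (simp add: mnormal_def)
qed

lemma no_one_rnorm: "w \<noteq> [] \<Longrightarrow> no_one (rnorm w)"
  by (induction w rule: rnorm.induct) auto

lemma no_one_lnorm: "w \<noteq> [] \<Longrightarrow> no_one (lnorm w)"
  using mnormal_lnorm[of w] lnorm_MOne_iff[of w] by (simp add: mnormal_def)

lemma mnormal_rnorm: "mnormal (rnorm w)"
  by (cases "w = []") (simp_all add: mnormal_def no_one_rnorm)

lemma mprim_lnorm: "aprim f \<Longrightarrow> mprim (bracket_image lnorm f)"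
  by (rule mprim_bracket[OF leaves_lnorm _ mnormal_lnorm mdelta_lnorm]) simp

lemma mprim_rnorm: "aprim f \<Longrightarrow> mprim (bracket_image rnorm f)"
  by (rule mprim_bracket[OF leaves_rnorm _ mnormal_rnorm mdelta_rnorm]) simp




lemma leaves_map_leaves: "leaves (map_leaves \<sigma> t) = map \<sigma> (leaves t)"
  by (induction t) auto

lemma map_leaves_foldl: "map_leaves \<sigma> (foldl (\<lambda>t j. MMul t (MX j)) t0 xs)
   = foldl (\<lambda>t j. MMul t (MX j)) (map_leaves \<sigma> t0) (map \<sigma> xs)"
  by (induction xs arbitrary: t0) auto

lemma lnorm_map: "lnorm (map \<sigma> w) = map_leaves \<sigma> (lnorm w)"
  by (cases w) (auto simp: map_leaves_foldl)

lemma rnorm_map: "rnorm (map \<sigma> w) = map_leaves \<sigma> (rnorm w)"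
  by (induction w rule: rnorm.induct) auto

lemma map_leaves_inj: "inj \<sigma> \<Longrightarrow> map_leaves \<sigma> x = map_leaves \<sigma> y \<Longrightarrow> x = y"
proof (induction x arbitrary: y)
  case MOne then show ?case by (cases y) auto
next
  case (MX i) then show ?case by (cases y) (auto dest: injD)
next
  case (MMul x1 x2) then show ?case by (cases y) auto
qed

lemma lnorm_ne_rnorm: "length w \<ge> 3 \<Longrightarrow> lnorm w \<noteq> rnorm w"
proof -
  assume len: "length w \<ge> 3"
  then obtain i j k r where w: "w = i # j # k # r"
    by (cases w; cases "tl w"; cases "tl (tl w)") auto
  obtain v x where vx: "w = v @ [x]" and v: "v \<noteq> []" using w by (metis rev_exhaust list.distinct(1) butlast.simps(2) append_butlast_last_id last_ConsR)
  have "lnorm w = MMul (lnorm v) (MX x)" using vx v by (simp add: lnorm_snoc)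
  moreover have "rnorm w = MMul (MX i) (MMul (MX j) (rnorm (k # r)))" using w by simp
  ultimately show ?thesis by simp
qed

lemma finite_supp_comb: "finite {w. f w \<noteq> 0} \<Longrightarrow> finite {w. g w \<noteq> 0} \<Longrightarrow> finite {w. c * f w + g w \<noteq> (0::'k::comm_ring_1)}"
  by (rule finite_subset[of _ "{w. f w \<noteq> 0} \<union> {w. g w \<noteq> 0}"]) auto

lemma Lie_n_props:
  assumes "f \<in> Lie_n n"
  shows "aprim f" "finite {w. f w \<noteq> 0}" "\<And>w. f w \<noteq> 0 \<Longrightarrow> distinct w \<and> set w = {1..n} \<and> length w = n"
proof -
  have fl: "f \<in> lie_polys" and s: "\<forall>w. f w \<noteq> 0 \<longrightarrow> distinct w \<and> set w = {1..n}"
    using assms by (auto simp: Lie_n_def)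
  show "aprim f" by (rule lie_aprim[OF fl])
  then show "finite {w. f w \<noteq> 0}" by (simp add: aprim_def)
  fix w assume "f w \<noteq> 0"
  then have d: "distinct w \<and> set w = {1..n}" using s by blast
  have "card (set w) = length w" using d by (intro distinct_card) simp
  then show "distinct w \<and> set w = {1..n} \<and> length w = n" using d by (metis card_atLeastAtMost diff_Suc_1)
qed

theorem proposition4p8p4:
  fixes a :: "'k::field_char_0 assoc" and n :: nat
  assumes hom: "\<forall>w. a w \<noteq> 0 \<longrightarrow> length w = n \<and> set w \<subseteq> {1..n}"
    and prim: "aprim a"
  shows "mprim (bracket_image lnorm a)
     \<and> (\<forall>t. bracket_image lnorm a t \<noteq> 0 \<longrightarrow>
            mnormal t \<and> length (leaves t) = n \<and> set (leaves t) \<subseteq> {1..n})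
     \<and> mprim (bracket_image rnorm a)
     \<and> (\<forall>t. bracket_image rnorm a t \<noteq> 0 \<longrightarrow>
            mnormal t \<and> length (leaves t) = n \<and> set (leaves t) \<subseteq> {1..n})
     \<and> (n \<ge> 3 \<longrightarrow>
         (\<exists>\<phi> \<psi> :: 'k assoc \<Rightarrow> 'k magma.
            (\<forall>f\<in>Lie_n n. \<phi> f \<in> Prim_Mag_n n \<and> \<psi> f \<in> Prim_Mag_n n)
          \<and> (\<forall>f\<in>Lie_n n. \<forall>g\<in>Lie_n n. \<forall>c::'k.
               \<phi> (\<lambda>w. c * f w + g w) = (\<lambda>t. c * \<phi> f t + \<phi> g t)
             \<and> \<psi> (\<lambda>w. c * f w + g w) = (\<lambda>t. c * \<psi> f t + \<psi> g t))
          \<and> (\<forall>\<sigma>. \<sigma> permutes {1..n} \<longrightarrow> (\<forall>f\<in>Lie_n n.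
               \<phi> (\<lambda>w. f (map \<sigma> w)) = (\<lambda>t. \<phi> f (map_leaves \<sigma> t))
             \<and> \<psi> (\<lambda>w. f (map \<sigma> w)) = (\<lambda>t. \<psi> f (map_leaves \<sigma> t))))
          \<and> (\<forall>f\<in>Lie_n n. \<forall>g\<in>Lie_n n.
               (\<lambda>t. \<phi> f t + \<psi> g t) = (\<lambda>_. 0) \<longrightarrow> f = (\<lambda>_. 0) \<and> g = (\<lambda>_. 0))))"
proof -
  have fina: "finite {w. a w \<noteq> 0}" using prim by (simp add: aprim_def)
  have suppL: "mnormal t \<and> length (leaves t) = n \<and> set (leaves t) \<subseteq> {1..n}"
    if "bracket_image lnorm a t \<noteq> 0" for t
  proof -
    have "lnorm (leaves t) = t \<and> a (leaves t) \<noteq> 0"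
      using that bracket_closed[OF leaves_lnorm fina, of t] by (cases "lnorm (leaves t) = t") simp_all
    then show ?thesis using hom mnormal_lnorm[of "leaves t"] by simp
  qed
  have suppR: "mnormal t \<and> length (leaves t) = n \<and> set (leaves t) \<subseteq> {1..n}"
    if "bracket_image rnorm a t \<noteq> 0" for t
  proof -
    have "rnorm (leaves t) = t \<and> a (leaves t) \<noteq> 0"
      using that bracket_closed[OF leaves_rnorm fina, of t] by (cases "rnorm (leaves t) = t") simp_all
    then show ?thesis using hom mnormal_rnorm[of "leaves t"] by simp
  qed
  have part5: "\<exists>\<phi> \<psi> :: 'k assoc \<Rightarrow> 'k magma.
            (\<forall>f\<in>Lie_n n. \<phi> f \<in> Prim_Mag_n n \<and> \<psi> f \<in> Prim_Mag_n n)
          \<and> (\<forall>f\<in>Lie_n n. \<forall>g\<in>Lie_n n. \<forall>c::'k.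
               \<phi> (\<lambda>w. c * f w + g w) = (\<lambda>t. c * \<phi> f t + \<phi> g t)
             \<and> \<psi> (\<lambda>w. c * f w + g w) = (\<lambda>t. c * \<psi> f t + \<psi> g t))
          \<and> (\<forall>\<sigma>. \<sigma> permutes {1..n} \<longrightarrow> (\<forall>f\<in>Lie_n n.
               \<phi> (\<lambda>w. f (map \<sigma> w)) = (\<lambda>t. \<phi> f (map_leaves \<sigma> t))
             \<and> \<psi> (\<lambda>w. f (map \<sigma> w)) = (\<lambda>t. \<psi> f (map_leaves \<sigma> t))))
          \<and> (\<forall>f\<in>Lie_n n. \<forall>g\<in>Lie_n n.
               (\<lambda>t. \<phi> f t + \<psi> g t) = (\<lambda>_. 0) \<longrightarrow> f = (\<lambda>_. 0) \<and> g = (\<lambda>_. 0))"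
    if n3: "n \<ge> 3"
  proof (rule exI[of _ "bracket_image lnorm"], rule exI[of _ "bracket_image rnorm"], intro conjI ballI allI impI)
    fix f :: "'k assoc" assume f: "f \<in> Lie_n n"
    note fp = Lie_n_props[OF f]
    have nonnil: "w \<noteq> []" if "f w \<noteq> 0" for w
      using fp(3)[OF that] n3 by auto
    show "bracket_image lnorm f \<in> Prim_Mag_n n"
      unfolding Prim_Mag_n_def
    proof (intro CollectI conjI allI impI)
      show "mprim (bracket_image lnorm f)" by (rule mprim_lnorm[OF fp(1)])
      fix t assume "bracket_image lnorm f t \<noteq> 0"
      then have c: "lnorm (leaves t) = t \<and> f (leaves t) \<noteq> 0"
        using bracket_closed[OF leaves_lnorm fp(2), of t] by (cases "lnorm (leaves t) = t") simp_all
      then have "no_one (lnorm (leaves t))" using nonnil no_one_lnorm by blast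
      then show "no_one t" using c by simp
      show "distinct (leaves t)" "set (leaves t) = {1..n}" using c fp(3) by blast+
    qed
  next
    fix f :: "'k assoc" assume f: "f \<in> Lie_n n"
    note fp = Lie_n_props[OF f]
    have nonnil: "w \<noteq> []" if "f w \<noteq> 0" for w
      using fp(3)[OF that] n3 by auto
    show "bracket_image rnorm f \<in> Prim_Mag_n n"
      unfolding Prim_Mag_n_def
    proof (intro CollectI conjI allI impI)
      show "mprim (bracket_image rnorm f)" by (rule mprim_rnorm[OF fp(1)])
      fix t assume "bracket_image rnorm f t \<noteq> 0"
      then have c: "rnorm (leaves t) = t \<and> f (leaves t) \<noteq> 0"
        using bracket_closed[OF leaves_rnorm fp(2), of t] by (cases "rnorm (leaves t) = t") simp_all
      then have "no_one (rnorm (leaves t))" using nonnil no_one_rnorm by blast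
      then show "no_one t" using c by simp
      show "distinct (leaves t)" "set (leaves t) = {1..n}" using c fp(3) by blast+
    qed
  next
    fix f g :: "'k assoc" and c :: 'k assume f: "f \<in> Lie_n n" and g: "g \<in> Lie_n n"
    have ff: "finite {w. f w \<noteq> 0}" by (rule Lie_n_props(2)[OF f])
    have fg: "finite {w. g w \<noteq> 0}" by (rule Lie_n_props(2)[OF g])
    have fc: "finite {w. c * f w + g w \<noteq> 0}" by (rule finite_supp_comb[OF ff fg])
    show "bracket_image lnorm (\<lambda>w. c * f w + g w) = (\<lambda>t. c * bracket_image lnorm f t + bracket_image lnorm g t)"
      by (rule ext) (simp add: bracket_closed[OF leaves_lnorm fc] bracket_closed[OF leaves_lnorm ff] bracket_closed[OF leaves_lnorm fg])
  next
    fix f g :: "'k assoc" and c :: 'k assume f: "f \<in> Lie_n n" and g: "g \<in> Lie_n n"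
    have ff: "finite {w. f w \<noteq> 0}" by (rule Lie_n_props(2)[OF f])
    have fg: "finite {w. g w \<noteq> 0}" by (rule Lie_n_props(2)[OF g])
    have fc: "finite {w. c * f w + g w \<noteq> 0}" by (rule finite_supp_comb[OF ff fg])
    show "bracket_image rnorm (\<lambda>w. c * f w + g w) = (\<lambda>t. c * bracket_image rnorm f t + bracket_image rnorm g t)"
      by (rule ext) (simp add: bracket_closed[OF leaves_rnorm fc] bracket_closed[OF leaves_rnorm ff] bracket_closed[OF leaves_rnorm fg])
  next
    fix \<sigma> :: "nat \<Rightarrow> nat" and f :: "'k assoc"
    assume \<sigma>: "\<sigma> permutes {1..n}" and f: "f \<in> Lie_n n"
    have inj: "inj \<sigma>" using \<sigma> by (rule permutes_inj)
    have ff: "finite {w. f w \<noteq> 0}" by (rule Lie_n_props(2)[OF f])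
    have fs: "finite {w. f (map \<sigma> w) \<noteq> 0}"
    proof -
      have "{w. f (map \<sigma> w) \<noteq> 0} = map \<sigma> -` {w. f w \<noteq> 0}" by (simp add: vimage_def)
      then show ?thesis using finite_vimageI[OF ff inj_mapI[OF inj]] by simp
    qed
    have iffL: "(map_leaves \<sigma> (lnorm (leaves t)) = map_leaves \<sigma> t) = (lnorm (leaves t) = t)" for t
      by (rule iffI, erule map_leaves_inj[OF inj], simp)
    have iffR: "(map_leaves \<sigma> (rnorm (leaves t)) = map_leaves \<sigma> t) = (rnorm (leaves t) = t)" for t
      by (rule iffI, erule map_leaves_inj[OF inj], simp)
    show "bracket_image lnorm (\<lambda>w. f (map \<sigma> w)) = (\<lambda>t. bracket_image lnorm f (map_leaves \<sigma> t))"
    proof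
      fix t
      have L: "bracket_image lnorm (\<lambda>w. f (map \<sigma> w)) t = (if lnorm (leaves t) = t then f (map \<sigma> (leaves t)) else 0)"
        by (rule bracket_closed[OF leaves_lnorm fs])
      have R: "bracket_image lnorm f (map_leaves \<sigma> t) = (if lnorm (leaves (map_leaves \<sigma> t)) = map_leaves \<sigma> t then f (leaves (map_leaves \<sigma> t)) else 0)"
        by (rule bracket_closed[OF leaves_lnorm ff])
      show "bracket_image lnorm (\<lambda>w. f (map \<sigma> w)) t = bracket_image lnorm f (map_leaves \<sigma> t)"
        unfolding L R by (simp only: leaves_map_leaves lnorm_map iffL)
    qed
  next
    fix \<sigma> :: "nat \<Rightarrow> nat" and f :: "'k assoc"
    assume \<sigma>: "\<sigma> permutes {1..n}" and f: "f \<in> Lie_n n"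
    have inj: "inj \<sigma>" using \<sigma> by (rule permutes_inj)
    have ff: "finite {w. f w \<noteq> 0}" by (rule Lie_n_props(2)[OF f])
    have fs: "finite {w. f (map \<sigma> w) \<noteq> 0}"
    proof -
      have "{w. f (map \<sigma> w) \<noteq> 0} = map \<sigma> -` {w. f w \<noteq> 0}" by (simp add: vimage_def)
      then show ?thesis using finite_vimageI[OF ff inj_mapI[OF inj]] by simp
    qed
    have iffR: "(map_leaves \<sigma> (rnorm (leaves t)) = map_leaves \<sigma> t) = (rnorm (leaves t) = t)" for t
      by (rule iffI, erule map_leaves_inj[OF inj], simp)
    show "bracket_image rnorm (\<lambda>w. f (map \<sigma> w)) = (\<lambda>t. bracket_image rnorm f (map_leaves \<sigma> t))"
    proof
      fix t
      have L: "bracket_image rnorm (\<lambda>w. f (map \<sigma> w)) t = (if rnorm (leaves t) = t then f (map \<sigma> (leaves t)) else 0)"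
        by (rule bracket_closed[OF leaves_rnorm fs])
      have R: "bracket_image rnorm f (map_leaves \<sigma> t) = (if rnorm (leaves (map_leaves \<sigma> t)) = map_leaves \<sigma> t then f (leaves (map_leaves \<sigma> t)) else 0)"
        by (rule bracket_closed[OF leaves_rnorm ff])
      show "bracket_image rnorm (\<lambda>w. f (map \<sigma> w)) t = bracket_image rnorm f (map_leaves \<sigma> t)"
        unfolding L R by (simp only: leaves_map_leaves rnorm_map iffR)
    qed
  next
    fix f g :: "'k assoc" assume f: "f \<in> Lie_n n" and g: "g \<in> Lie_n n"
      and z: "(\<lambda>t. bracket_image lnorm f t + bracket_image rnorm g t) = (\<lambda>_. 0)"
    have ff: "finite {w. f w \<noteq> 0}" by (rule Lie_n_props(2)[OF f])
    have fg: "finite {w. g w \<noteq> 0}" by (rule Lie_n_props(2)[OF g])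
    have zt: "bracket_image lnorm f t + bracket_image rnorm g t = 0" for t
      using fun_cong[OF z, of t] by simp
    show "f = (\<lambda>_. 0)"
    proof
      fix w show "f w = 0"
      proof (rule ccontr)
        assume nz: "f w \<noteq> 0"
        then have "length w \<ge> 3" using Lie_n_props(3)[OF f nz] n3 by simp
        then have ne: "rnorm w \<noteq> lnorm w" using lnorm_ne_rnorm by metis
        have "bracket_image lnorm f (lnorm w) = f w"
          by (simp add: bracket_closed[OF leaves_lnorm ff])
        moreover have "bracket_image rnorm g (lnorm w) = 0"
          using ne by (simp add: bracket_closed[OF leaves_rnorm fg])
        ultimately show False using zt[of "lnorm w"] nz by simp
      qed
    qed
    show "g = (\<lambda>_. 0)"
    proof
      fix w show "g w = 0"
      proof (rule ccontr)
        assume nz: "g w \<noteq> 0"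
        then have "length w \<ge> 3" using Lie_n_props(3)[OF g nz] n3 by simp
        then have ne: "lnorm w \<noteq> rnorm w" using lnorm_ne_rnorm by metis
        have "bracket_image rnorm g (rnorm w) = g w"
          by (simp add: bracket_closed[OF leaves_rnorm fg])
        moreover have "bracket_image lnorm f (rnorm w) = 0"
          using ne by (simp add: bracket_closed[OF leaves_lnorm ff])
        ultimately show False using zt[of "rnorm w"] nz by simp
      qed
    qed
  qed
  show ?thesis
    apply (intro conjI impI)
        apply (rule mprim_lnorm[OF prim])
    using suppL apply blast
      apply (rule mprim_rnorm[OF prim])
    using suppR apply blast
    apply (rule part5, assumption)
    done
qed



end
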